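(* Let $\mathbb F$ be a field and $A=[a_{ij}],C=[c_{ij}]\in M_n(\mathbb F)$. Then $C=DAD^{-1}$ for some invertible diagonal matrix $D$ if and only if both of the following hold: (1) $a_{ij}\neq0$ if and only if $c_{ij}\neq0$, for all $i,j\in[n]$; (2) for every sequence $(i_1,\dots,i_p)$ ($p\ge1$) of distinct elements of $[n]$ such that, setting $i_{p+1}:=i_1$, at least one of $a_{i_ki_{k+1}}$ and $a_{i_{k+1}i_k}$ is nonzero for each $k\in[p]$, we have $$f_{i_1i_2}(A)\cdots f_{i_{p-1}i_p}(A)f_{i_pi_1}(A)=f_{i_1i_2}(C)\cdots f_{i_{p-1}i_p}(C)f_{i_pi_1}(C).$$
   Context: $[n]=\{1,\dots,n\}$. For $X=[x_{ij}]\in M_n(\mathbb F)$ and $i,j\in[n]$ define $f_{ij}(X)=x_{ij}$ if $x_{ij}\neq0$; $f_{ij}(X)=1/x_{ji}$ if $x_{ij}=0$ and $x_{ji}\ne0$; and $f_{ij}(X)=0$ if $x_{ij}=x_{ji}=0$. *)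

theory Defs
  imports "HOL-Analysis.Analysis"
begin

definition fentry :: "'a::field ^'n^'n \<Rightarrow> 'n \<Rightarrow> 'n \<Rightarrow> 'a" where
  "fentry X i j = (if X $ i $ j \<noteq> 0 then X $ i $ j
                   else if X $ j $ i \<noteq> 0 then inverse (X $ j $ i) else 0)"

definition diagonal_mat :: "'a::zero ^'n^'n \<Rightarrow> bool" where
  "diagonal_mat D \<longleftrightarrow> (\<forall>i j. i \<noteq> j \<longrightarrow> D $ i $ j = 0)"

end

theory Submission imports Defs begin

definition dg :: "('n::finite \<Rightarrow> 'a::field) \<Rightarrow> 'a^'n^'n" where
  "dg d = (\<chi> i j. if i = j then d i else 0)"

lemma dg_mult_left: "(dg d ** M) $ i $ j = d i * M $ i $ j"
proof -
  have "(\<Sum>k\<in>UNIV. (if i = k then d i else 0) * M $ k $ j) = (\<Sum>k\<in>UNIV. if k = i then d i * M $ i $ j else 0)"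
    by (rule sum.cong) auto
  thus ?thesis unfolding dg_def matrix_matrix_mult_def by simp
qed

lemma dg_mult_right: "(M ** dg d) $ i $ j = M $ i $ j * d j"
proof -
  have "(\<Sum>k\<in>UNIV. M $ i $ k * (if k = j then d k else 0)) = (\<Sum>k\<in>UNIV. if k = j then M $ i $ j * d j else 0)"
    by (rule sum.cong) auto
  thus ?thesis unfolding dg_def matrix_matrix_mult_def by simp
qed

lemma dg_dg: "dg d ** dg e = dg (\<lambda>i. d i * e i)"
  by (simp add: vec_eq_iff dg_mult_left) (simp add: dg_def)

lemma dg_one: "dg (\<lambda>i. 1) = mat 1"
  by (simp add: dg_def mat_def)

lemma dg_inv:
  assumes "\<forall>i. d i \<noteq> 0"
  shows "invertible (dg d) \<and> matrix_inv (dg d) = dg (\<lambda>i. inverse (d i))"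
proof -
  have 1: "dg d ** dg (\<lambda>i. inverse (d i)) = mat 1" "dg (\<lambda>i. inverse (d i)) ** dg d = mat 1"
    using assms by (simp_all add: dg_dg dg_one[symmetric])
  hence inv: "invertible (dg d)" unfolding invertible_def by blast
  have "dg d ** matrix_inv (dg d) = mat 1 \<and> matrix_inv (dg d) ** dg d = mat 1"
    unfolding matrix_inv_def by (rule someI_ex) (use 1 in blast)
  hence "matrix_inv (dg d) = dg (\<lambda>i. inverse (d i))"
    using 1 by (metis matrix_mul_assoc matrix_mul_lid matrix_mul_rid)
  thus ?thesis using inv by simp
qed

lemma diag_is_dg: "diagonal_mat D \<Longrightarrow> D = dg (\<lambda>i. D $ i $ i)"
  by (auto simp: diagonal_mat_def dg_def vec_eq_iff)

lemma invertible_diag_nz: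
  assumes "invertible (dg d)" shows "d i \<noteq> 0"
proof
  assume "d i = 0"
  from assms obtain B where "dg d ** B = mat 1" unfolding invertible_def by blast
  hence "(dg d ** B) $ i $ i = 1" by (simp add: mat_def)
  with \<open>d i = 0\<close> show False by (simp add: dg_mult_left)
qed

lemma conj_entry:
  assumes "\<forall>i. d i \<noteq> 0"
  shows "(dg d ** A ** matrix_inv (dg d)) $ i $ j = d i * A $ i $ j / d j"
  using dg_inv[OF assms] by (simp add: dg_mult_right dg_mult_left divide_inverse)


lemma cyc_shift:
  fixes g :: "nat \<Rightarrow> 'a::comm_monoid_mult"
  assumes "p > 0"
  shows "(\<Prod>k<p. g ((k+1) mod p)) = (\<Prod>k<p. g k)"
proof -
  obtain q where p: "p = Suc q" using assms by (cases p) auto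
  have "(\<Prod>k<Suc q. g ((k+1) mod Suc q)) = (\<Prod>k<q. g ((k+1) mod Suc q)) * g 0"
    by (simp add: prod.lessThan_Suc)
  also have "(\<Prod>k<q. g ((k+1) mod Suc q)) = (\<Prod>k<q. g (Suc k))"
    by (rule prod.cong) auto
  also have "(\<Prod>k<q. g (Suc k)) * g 0 = (\<Prod>k<Suc q. g k)"
    by (subst prod.lessThan_Suc_shift) (simp add: mult.commute)
  finally show ?thesis using p by simp
qed

lemma fentry_conj:
  fixes A C :: "'a::field^'n^'n"
  assumes d: "\<forall>i. d i \<noteq> 0" and C: "\<forall>i j. C $ i $ j = d i * A $ i $ j / d j"
  shows "fentry C i j = d i / d j * fentry A i j"
proof -
  have 1: "C $ i $ j = d i * A $ i $ j / d j" "C $ j $ i = d j * A $ j $ i / d i" using C by auto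
  have "d i \<noteq> 0" "d j \<noteq> 0" using d by auto
  thus ?thesis unfolding fentry_def 1 by (auto simp: field_simps)
qed

lemma forward:
  fixes A C :: "'a::field^'n^'n"
  assumes d: "\<forall>i. d i \<noteq> 0" and C: "\<forall>i j. C $ i $ j = d i * A $ i $ j / d j"
    and xs: "xs \<noteq> []"
  shows "(\<Prod>k<length xs. fentry A (xs ! k) (xs ! ((k + 1) mod length xs))) =
        (\<Prod>k<length xs. fentry C (xs ! k) (xs ! ((k + 1) mod length xs)))"
proof -
  let ?p = "length xs"
  have p: "?p > 0" using xs by simp
  have "(\<Prod>k<?p. fentry C (xs ! k) (xs ! ((k + 1) mod ?p))) =
     (\<Prod>k<?p. d (xs ! k) / d (xs ! ((k + 1) mod ?p)) * fentry A (xs ! k) (xs ! ((k + 1) mod ?p)))"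
    using fentry_conj[OF d C] by simp
  also have "\<dots> = (\<Prod>k<?p. d (xs ! k)) / (\<Prod>k<?p. d (xs ! ((k + 1) mod ?p))) * 
      (\<Prod>k<?p. fentry A (xs ! k) (xs ! ((k + 1) mod ?p)))"
    by (simp add: prod.distrib prod_dividef)
  also have "(\<Prod>k<?p. d (xs ! ((k + 1) mod ?p))) = (\<Prod>k<?p. d (xs ! k))"
    using cyc_shift[OF p, of "\<lambda>k. d (xs ! k)"] by simp
  also have "(\<Prod>k<?p. d (xs ! k)) \<noteq> 0" using d by simp
  hence "(\<Prod>k<?p. d (xs ! k)) / (\<Prod>k<?p. d (xs ! k)) = 1" by simp
  finally show ?thesis by simp
qed


definition edge :: "'a::field^'n^'n \<Rightarrow> 'n \<Rightarrow> 'n \<Rightarrow> bool" where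
  "edge A i j = (A $ i $ j \<noteq> 0 \<or> A $ j $ i \<noteq> 0)"
definition rr :: "'a::field^'n^'n \<Rightarrow> 'a^'n^'n \<Rightarrow> 'n \<Rightarrow> 'n \<Rightarrow> 'a" where
  "rr A C i j = fentry C i j / fentry A i j"
definition wp :: "'a::field^'n^'n \<Rightarrow> 'a^'n^'n \<Rightarrow> (nat \<Rightarrow> 'n) \<Rightarrow> nat \<Rightarrow> 'a" where
  "wp A C v m = (\<Prod>k\<in>{0..<m}. rr A C (v k) (v (Suc k)))"
definition walk :: "'a::field^'n^'n \<Rightarrow> (nat \<Rightarrow> 'n) \<Rightarrow> nat \<Rightarrow> bool" where
  "walk A v m = (\<forall>k<m. edge A (v k) (v (Suc k)))"
definition cat :: "(nat \<Rightarrow> 'n) \<Rightarrow> nat \<Rightarrow> (nat \<Rightarrow> 'n) \<Rightarrow> nat \<Rightarrow> 'n" where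
  "cat u m v = (\<lambda>k. if k \<le> m then u k else v (k - m))"
definition reach :: "'a::field^'n^'n \<Rightarrow> 'n \<Rightarrow> 'n \<Rightarrow> bool" where
  "reach A x y = (\<exists>v m. walk A v m \<and> v 0 = x \<and> v m = y)"

lemma edge_sym: "edge A i j \<Longrightarrow> edge A j i" by (auto simp: edge_def)

lemma fentry_nz: "edge A i j \<Longrightarrow> fentry A i j \<noteq> 0"
  by (auto simp: edge_def fentry_def)

lemma cat_walk:
  assumes "walk A u m" "walk A v n" "u m = v 0"
  shows "walk A (cat u m v) (m + n)"
  unfolding walk_def
proof (intro allI impI)
  fix k assume k: "k < m + n"
  show "edge A (cat u m v k) (cat u m v (Suc k))"
  proof (cases "k < m")
    case True thus ?thesis using assms(1) by (auto simp: cat_def walk_def)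
  next
    case False
    then obtain j where j: "k = m + j" "j < n" using k by (metis add_less_cancel_left le_Suc_ex not_less)
    have "edge A (v j) (v (Suc j))" using assms(2) j by (auto simp: walk_def)
    thus ?thesis using j assms(3) by (auto simp: cat_def Suc_diff_le)
  qed
qed

lemma cat_wp:
  assumes "u m = v 0"
  shows "wp A C (cat u m v) (m + n) = wp A C u m * wp A C v n"
proof -
  let ?f = "\<lambda>k. rr A C (cat u m v k) (cat u m v (Suc k))"
  have "wp A C (cat u m v) (m + n) = prod ?f {0..<m} * prod ?f {m..<m+n}"
    unfolding wp_def by (rule prod.atLeastLessThan_concat[symmetric]) auto
  also have "prod ?f {0..<m} = wp A C u m"
    unfolding wp_def by (rule prod.cong) (auto simp: cat_def)
  also have "prod ?f {m..<m+n} = prod ?f {0+m..<n+m}" by (simp add: add.commute)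
  also have "\<dots> = prod (\<lambda>i. ?f (i + m)) {0..<n}" by (rule prod.shift_bounds_nat_ivl)
  also have "\<dots> = wp A C v n"
    unfolding wp_def by (rule prod.cong) (use assms in \<open>auto simp: cat_def Suc_diff_le\<close>)
  finally show ?thesis .
qed

lemma reach_refl: "reach A x x"
  unfolding reach_def walk_def by (rule exI[of _ "\<lambda>_. x"], rule exI[of _ 0]) auto

lemma reach_sym: assumes "reach A x y" shows "reach A y x"
proof -
  obtain v m where v: "walk A v m" "v 0 = x" "v m = y" using assms by (auto simp: reach_def)
  have "walk A (\<lambda>k. v (m - k)) m"
    unfolding walk_def
  proof (intro allI impI)
    fix k assume k: "k < m"
    have "edge A (v (m - Suc k)) (v (Suc (m - Suc k)))" using v(1) k by (auto simp: walk_def)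
    moreover have "Suc (m - Suc k) = m - k" using k by simp
    ultimately show "edge A (v (m - k)) (v (m - Suc k))" by (metis edge_sym)
  qed
  thus ?thesis using v unfolding reach_def by (intro exI[of _ "\<lambda>k. v (m - k)"] exI[of _ m]) auto
qed

lemma reach_trans: assumes "reach A x y" "reach A y z" shows "reach A x z"
proof -
  obtain u m where u: "walk A u m" "u 0 = x" "u m = y" using assms by (auto simp: reach_def)
  obtain v n where v: "walk A v n" "v 0 = y" "v n = z" using assms by (auto simp: reach_def)
  have "walk A (cat u m v) (m + n)" using u v by (intro cat_walk) auto
  moreover have "cat u m v 0 = x" "cat u m v (m + n) = z" using u v by (auto simp: cat_def)
  ultimately show ?thesis unfolding reach_def by blast
qed


context
  fixes A C :: "'a::field^'n^'n"
  assumes supp: "\<forall>i j. A $ i $ j \<noteq> 0 \<longleftrightarrow> C $ i $ j \<noteq> 0"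
  and cyc: "\<forall>xs :: 'n list. xs \<noteq> [] \<and> distinct xs \<and>
        (\<forall>k < length xs. A $ (xs ! k) $ (xs ! ((k + 1) mod length xs)) \<noteq> 0 \<or>
                          A $ (xs ! ((k + 1) mod length xs)) $ (xs ! k) \<noteq> 0) \<longrightarrow>
        (\<Prod>k<length xs. fentry A (xs ! k) (xs ! ((k + 1) mod length xs))) =
        (\<Prod>k<length xs. fentry C (xs ! k) (xs ! ((k + 1) mod length xs)))"
begin

lemma edgeC: "edge A i j \<Longrightarrow> edge C i j"
  using supp by (auto simp: edge_def)

lemma rr_nz: "edge A i j \<Longrightarrow> rr A C i j \<noteq> 0"
  by (simp add: rr_def fentry_nz edgeC)

lemma wp_nz: "walk A v m \<Longrightarrow> wp A C v m \<noteq> 0"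
  unfolding wp_def walk_def by (auto simp: rr_nz)

lemma simple_cycle:
  assumes w: "walk A v m" and m: "m > 0" and cl: "v m = v 0" and inj: "inj_on v {..<m}"
  shows "wp A C v m = 1"
proof -
  define xs where "xs = map v [0..<m]"
  have len: "length xs = m" by (simp add: xs_def)
  have nth: "xs ! k = v k" if "k < m" for k using that by (simp add: xs_def)
  have nxt: "xs ! ((k + 1) mod m) = v (Suc k)" if "k < m" for k
  proof (cases "Suc k < m")
    case True thus ?thesis by (simp add: nth)
  next
    case False hence "Suc k = m" using that by simp
    thus ?thesis using m cl by (simp add: nth)
  qed
  have nxt2: "v (Suc k mod m) = v (Suc k)" if "k < m" for k
    using nxt[OF that] nth[of "Suc k mod m"] m by simp
  have "xs \<noteq> []" using m len by auto
  moreover have "distinct xs" using inj by (simp add: xs_def distinct_map lessThan_atLeast0)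
  moreover have "\<forall>k < length xs. A $ (xs ! k) $ (xs ! ((k + 1) mod length xs)) \<noteq> 0 \<or>
                          A $ (xs ! ((k + 1) mod length xs)) $ (xs ! k) \<noteq> 0"
    using w by (auto simp: len nth nxt nxt2 walk_def edge_def)
  ultimately have eq: "(\<Prod>k<length xs. fentry A (xs ! k) (xs ! ((k + 1) mod length xs))) =
        (\<Prod>k<length xs. fentry C (xs ! k) (xs ! ((k + 1) mod length xs)))" using cyc by blast
  have eqA: "(\<Prod>k<length xs. fentry A (xs ! k) (xs ! ((k + 1) mod length xs))) = 
     (\<Prod>k\<in>{0..<m}. fentry A (v k) (v (Suc k)))"
    unfolding len lessThan_atLeast0 by (rule prod.cong) (auto simp: nth nxt nxt2)
  have eqC: "(\<Prod>k<length xs. fentry C (xs ! k) (xs ! ((k + 1) mod length xs))) = 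
     (\<Prod>k\<in>{0..<m}. fentry C (v k) (v (Suc k)))"
    unfolding len lessThan_atLeast0 by (rule prod.cong) (auto simp: nth nxt nxt2)
  have nz: "(\<Prod>k\<in>{0..<m}. fentry A (v k) (v (Suc k))) \<noteq> 0"
    using w by (auto simp: walk_def fentry_nz)
  have "wp A C v m = (\<Prod>k\<in>{0..<m}. fentry C (v k) (v (Suc k))) / (\<Prod>k\<in>{0..<m}. fentry A (v k) (v (Suc k)))"
    unfolding wp_def rr_def by (rule prod_dividef)
  also have "\<dots> = 1" using eq eqA eqC nz by simp
  finally show ?thesis .
qed

lemma closed_walk:
  "walk A v m \<Longrightarrow> v m = v 0 \<Longrightarrow> wp A C v m = 1"
proof (induction m arbitrary: v rule: less_induct)
  case (less m)
  show ?case
  proof (cases "m = 0")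
    case True thus ?thesis by (simp add: wp_def)
  next
    case m0: False
    show ?thesis
    proof (cases "inj_on v {..<m}")
      case True thus ?thesis using simple_cycle less.prems m0 by blast
    next
      case False
      then obtain a b where ab: "a < b" "b < m" "v a = v b"
        unfolding inj_on_def by (metis lessThan_iff linorder_neqE_nat)
      let ?f = "\<lambda>k. rr A C (v k) (v (Suc k))"
      define v1 where "v1 = (\<lambda>k. v (a + k))"
      have w1: "walk A v1 (b - a)" using less.prems(1) ab unfolding walk_def v1_def by auto
      have c1: "v1 (b - a) = v1 0" using ab by (simp add: v1_def)
      have p1: "wp A C v1 (b - a) = 1" using less.IH[OF _ w1 c1] ab by simp
      define v2 where "v2 = (\<lambda>k. if k \<le> a then v k else v (k + (b - a)))"
      have w2: "walk A v2 (m - (b - a))"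
        unfolding walk_def
      proof (intro allI impI)
        fix k assume k: "k < m - (b - a)"
        have e: "\<And>j. j < m \<Longrightarrow> edge A (v j) (v (Suc j))" using less.prems(1) by (auto simp: walk_def)
        show "edge A (v2 k) (v2 (Suc k))"
        proof (cases "k < a")
          case True thus ?thesis using e[of k] ab by (auto simp: v2_def)
        next
          case False
          hence "v2 k = v (k + (b - a))" using ab by (auto simp: v2_def)
          moreover have "v2 (Suc k) = v (Suc (k + (b - a)))" using False ab by (auto simp: v2_def)
          moreover have "k + (b - a) < m" using k ab by auto
          ultimately show ?thesis using e by simp
        qed
      qed
      have c2: "v2 (m - (b - a)) = v2 0" using ab less.prems(2) by (auto simp: v2_def)
      have p2: "wp A C v2 (m - (b - a)) = 1" using less.IH[OF _ w2 c2] ab by simp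
      have s1: "wp A C v m = prod ?f {0..<a} * (prod ?f {a..<b} * prod ?f {b..<m})"
      proof -
        have "wp A C v m = prod ?f {0..<a} * prod ?f {a..<m}"
          unfolding wp_def by (rule prod.atLeastLessThan_concat[symmetric]) (use ab in auto)
        also have "prod ?f {a..<m} = prod ?f {a..<b} * prod ?f {b..<m}"
          by (rule prod.atLeastLessThan_concat[symmetric]) (use ab in auto)
        finally show ?thesis .
      qed
      have s2: "prod ?f {a..<b} = wp A C v1 (b - a)"
      proof -
        have "prod ?f {a..<b} = prod ?f {0 + a..<(b - a) + a}" using ab by simp
        also have "\<dots> = prod (\<lambda>i. ?f (i + a)) {0..<b - a}" by (rule prod.shift_bounds_nat_ivl)
        finally show ?thesis unfolding wp_def v1_def by (simp add: add.commute)
      qed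
      have s3: "prod ?f {0..<a} * prod ?f {b..<m} = wp A C v2 (m - (b - a))"
      proof -
        let ?g = "\<lambda>k. rr A C (v2 k) (v2 (Suc k))"
        have "wp A C v2 (m - (b - a)) = prod ?g {0..<a} * prod ?g {a..<m - (b - a)}"
          unfolding wp_def by (rule prod.atLeastLessThan_concat[symmetric]) (use ab in auto)
        also have "prod ?g {0..<a} = prod ?f {0..<a}"
          by (rule prod.cong) (auto simp: v2_def)
        also have "prod ?g {a..<m - (b - a)} = prod (\<lambda>i. ?f (i + (b - a))) {a..<m - (b - a)}"
          by (rule prod.cong) (use ab in \<open>auto simp: v2_def\<close>)
        also have "\<dots> = prod ?f {a + (b - a)..<(m - (b - a)) + (b - a)}"
          by (rule prod.shift_bounds_nat_ivl[symmetric])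
        also have "{a + (b - a)..<(m - (b - a)) + (b - a)} = {b..<m}" using ab by auto
        finally show ?thesis by simp
      qed
      have "wp A C v m = (prod ?f {0..<a} * prod ?f {b..<m}) * prod ?f {a..<b}"
        using s1 by (simp add: ac_simps)
      thus ?thesis using p1 p2 s2 s3 by simp
    qed
  qed
qed

lemma path_indep:
  assumes u: "walk A u m" "u 0 = x" "u m = y" and v: "walk A v n" "v 0 = x" "v n = y"
  shows "wp A C u m = wp A C v n"
proof -
  have "reach A y x" using reach_sym[of A x y] u unfolding reach_def by blast
  then obtain z l where z: "walk A z l" "z 0 = y" "z l = x" unfolding reach_def by blast
  have "walk A (cat u m z) (m + l)" by (rule cat_walk) (use u z in auto)
  hence "wp A C (cat u m z) (m + l) = 1"
    by (rule closed_walk) (use u z in \<open>auto simp: cat_def\<close>)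
  hence 1: "wp A C u m * wp A C z l = 1" using cat_wp[of u m z A C l] u z by simp
  have "walk A (cat v n z) (n + l)" by (rule cat_walk) (use v z in auto)
  hence "wp A C (cat v n z) (n + l) = 1"
    by (rule closed_walk) (use v z in \<open>auto simp: cat_def\<close>)
  hence 2: "wp A C v n * wp A C z l = 1" using cat_wp[of v n z A C l] v z by simp
  have "wp A C z l \<noteq> 0" using 1 by auto
  with 1 2 show ?thesis by (metis mult_right_cancel)
qed

lemma backward: "\<exists>D. diagonal_mat D \<and> invertible D \<and> C = D ** A ** matrix_inv D"
proof -
  define \<rho> where "\<rho> i = (SOME k. reach A i k)" for i
  have rho_reach: "reach A i (\<rho> i)" for i
    unfolding \<rho>_def by (rule someI[of _ i]) (rule reach_refl)
  have rho_eq: "\<rho> i = \<rho> j" if "reach A i j" for i j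
  proof -
    have "(\<lambda>k. reach A i k) = (\<lambda>k. reach A j k)"
      using that reach_sym reach_trans by blast
    thus ?thesis unfolding \<rho>_def by simp
  qed
  define W where "W i = (SOME p. walk A (fst p) (snd p) \<and> fst p 0 = \<rho> i \<and> fst p (snd p) = i)" for i
  have W: "walk A (fst (W i)) (snd (W i)) \<and> fst (W i) 0 = \<rho> i \<and> fst (W i) (snd (W i)) = i" for i
  proof -
    have "reach A (\<rho> i) i" using rho_reach reach_sym by blast
    then obtain v m where "walk A v m \<and> v 0 = \<rho> i \<and> v m = i" unfolding reach_def by blast
    hence "\<exists>p. walk A (fst p) (snd p) \<and> fst p 0 = \<rho> i \<and> fst p (snd p) = i" by (intro exI[of _ "(v, m)"]) simp
    thus ?thesis unfolding W_def by (rule someI_ex)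
  qed
  define Q where "Q i = wp A C (fst (W i)) (snd (W i))" for i
  have Q_nz: "Q i \<noteq> 0" for i unfolding Q_def using W wp_nz by blast
  have Q_edge: "Q j = Q i * rr A C i j" if ed: "edge A i j" for i j
  proof -
    define u where "u = fst (W i)"
    define m where "m = snd (W i)"
    define e where "e = (\<lambda>k::nat. if k = 0 then i else j)"
    have we: "walk A e 1" using ed by (simp add: walk_def e_def)
    have "reach A i j" unfolding reach_def using we by (intro exI[of _ e] exI[of _ 1]) (simp add: e_def)
    hence rj: "\<rho> i = \<rho> j" by (rule rho_eq)
    have wu: "walk A u m" "u 0 = \<rho> i" "u m = i" using W[of i] by (auto simp: u_def m_def)
    have wc: "walk A (cat u m e) (m + 1)" by (rule cat_walk) (use wu we in \<open>auto simp: e_def\<close>)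
    have "wp A C (cat u m e) (m + 1) = Q j"
      unfolding Q_def
      by (rule path_indep[OF wc _ _, of "\<rho> j" j]) (use wu W[of j] rj in \<open>auto simp: cat_def e_def\<close>)
    moreover have "wp A C (cat u m e) (m + 1) = Q i * rr A C i j"
      using cat_wp[of u m e A C 1] wu by (simp add: Q_def u_def m_def wp_def e_def)
    ultimately show ?thesis by simp
  qed
  define D where "D = dg (\<lambda>i. inverse (Q i))"
  have dnz: "\<forall>i. inverse (Q i) \<noteq> 0" using Q_nz by simp
  have "diagonal_mat D" by (simp add: D_def dg_def diagonal_mat_def)
  moreover have "invertible D" using dg_inv[OF dnz] by (simp add: D_def)
  moreover have "C = D ** A ** matrix_inv D"
  proof -
    have "C $ i $ j = (D ** A ** matrix_inv D) $ i $ j" for i j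
    proof (cases "A $ i $ j = 0")
      case True thus ?thesis using supp by (simp add: D_def conj_entry[OF dnz])
    next
      case False
      hence ed: "edge A i j" by (simp add: edge_def)
      have "C $ i $ j \<noteq> 0" using False supp by blast
      hence rr: "rr A C i j = C $ i $ j / A $ i $ j" using False by (simp add: rr_def fentry_def)
      have ent: "(D ** A ** matrix_inv D) $ i $ j = inverse (Q i) * A $ i $ j / inverse (Q j)"
        by (simp add: D_def conj_entry[OF dnz])
      show ?thesis unfolding ent using Q_edge[OF ed] Q_nz[of i] Q_nz[of j] False
        by (simp add: rr field_simps)
    qed
    thus ?thesis by (simp add: vec_eq_iff)
  qed
  ultimately show ?thesis by blast
qed

end

theorem theorem2p9:
  fixes A C :: "'a::field ^'n^'n"
  shows "(\<exists>D. diagonal_mat D \<and> invertible D \<and> C = D ** A ** matrix_inv D) \<longleftrightarrow>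
    ((\<forall>i j. A $ i $ j \<noteq> 0 \<longleftrightarrow> C $ i $ j \<noteq> 0) \<and>
     (\<forall>xs :: 'n list. xs \<noteq> [] \<and> distinct xs \<and>
        (\<forall>k < length xs. A $ (xs ! k) $ (xs ! ((k + 1) mod length xs)) \<noteq> 0 \<or>
                          A $ (xs ! ((k + 1) mod length xs)) $ (xs ! k) \<noteq> 0) \<longrightarrow>
        (\<Prod>k<length xs. fentry A (xs ! k) (xs ! ((k + 1) mod length xs))) =
        (\<Prod>k<length xs. fentry C (xs ! k) (xs ! ((k + 1) mod length xs)))))"
proof
  assume "\<exists>D. diagonal_mat D \<and> invertible D \<and> C = D ** A ** matrix_inv D"
  then obtain D where D: "diagonal_mat D" "invertible D" "C = D ** A ** matrix_inv D" by blast
  define d where "d = (\<lambda>i. D $ i $ i)"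
  have Dd: "D = dg d" using diag_is_dg[OF D(1)] by (simp add: d_def)
  have dnz: "\<forall>i. d i \<noteq> 0" using D(2) invertible_diag_nz unfolding Dd by blast
  have Cij: "\<forall>i j. C $ i $ j = d i * A $ i $ j / d j"
    using D(3) conj_entry[OF dnz] unfolding Dd by simp
  show "(\<forall>i j. A $ i $ j \<noteq> 0 \<longleftrightarrow> C $ i $ j \<noteq> 0) \<and>
     (\<forall>xs :: 'n list. xs \<noteq> [] \<and> distinct xs \<and>
        (\<forall>k < length xs. A $ (xs ! k) $ (xs ! ((k + 1) mod length xs)) \<noteq> 0 \<or>
                          A $ (xs ! ((k + 1) mod length xs)) $ (xs ! k) \<noteq> 0) \<longrightarrow>
        (\<Prod>k<length xs. fentry A (xs ! k) (xs ! ((k + 1) mod length xs))) =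
        (\<Prod>k<length xs. fentry C (xs ! k) (xs ! ((k + 1) mod length xs))))"
    using dnz Cij forward[OF dnz Cij] by auto
next
  assume "(\<forall>i j. A $ i $ j \<noteq> 0 \<longleftrightarrow> C $ i $ j \<noteq> 0) \<and>
     (\<forall>xs :: 'n list. xs \<noteq> [] \<and> distinct xs \<and>
        (\<forall>k < length xs. A $ (xs ! k) $ (xs ! ((k + 1) mod length xs)) \<noteq> 0 \<or>
                          A $ (xs ! ((k + 1) mod length xs)) $ (xs ! k) \<noteq> 0) \<longrightarrow>
        (\<Prod>k<length xs. fentry A (xs ! k) (xs ! ((k + 1) mod length xs))) =
        (\<Prod>k<length xs. fentry C (xs ! k) (xs ! ((k + 1) mod length xs))))"
  thus "\<exists>D. diagonal_mat D \<and> invertible D \<and> C = D ** A ** matrix_inv D"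
    using backward by blast
qed

end
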